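(* Let $(V,\le,\preccurlyeq)$ be a mixed lattice vector space equipped with a vector topology $\tau$. Consider: (a) $\tau$ is locally symmetric-solid; (b) $\tau$ is locally $(\le)$-full and the mixed lattice operations are continuous at zero; (c) the mixed lattice operations $(x,y)\mapsto x\curlyvee y$ and $(x,y)\mapsto x\curlywedge y$ are uniformly continuous; (d) $\tau$ is locally mixed-full and the mixed lattice operations are continuous at zero. Then (a) and (b) are equivalent, each of them implies (c), and (c) implies (d).
   Context: A mixed lattice vector space $(V,\le,\preccurlyeq)$ is a real vector space $V$ with two partial orderings $\le$ (initial order) and $\preccurlyeq$ (specific order), each making $V$ a partially ordered vector space, with positive cones $V_p=\{x:0\le x\}$, $V_{sp}=\{x:0\preccurlyeq x\}$, such that: (1) for all $x,y$ the elements $x\curlyvee y=\min\{w: w\succcurlyeq x,\ w\ge y\}$ and $x\curlywedge y=\max\{w: w\preccurlyeq x,\ w\le y\}$ exist (min/max with respect to $\le$); (2) $x\preccurlyeq y$ implies $x\le y$; (3) $x\curlyvee y, x\curlywedge y\in V_{sp}$ whenever $x,y\in V_{sp}$. The mixed lattice operations are $(x,y)\mapsto x\curlyvee y$ and $(x,y)\mapsto x\curlywedge y$; "continuous at zero" means continuous at $(0,0)$. Notation: $x^u=0\curlyvee x$, $x^l=0\curlyvee(-x)$, $s(x)=x^u+x^l$. A set $A$ is symmetric-solid if $x\in A$ and $s(y)\le s(x)$ imply $y\in A$; it is $(\le)$-full if $x,y\in A$ and $y\le z\le x$ imply $z\in A$. $\tau$ is locally symmetric-solid (resp. locally $(\le)$-full)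 if it has a base of neighborhoods of zero consisting of symmetric-solid (resp. $(\le)$-full) sets. $\tau$ is locally mixed-full if every neighborhood of zero contains a neighborhood $W$ of zero such that $y\in W$ and $0\preccurlyeq x\le y$ imply $x\in W$. Uniform continuity of $g:V\times V\to V$: for each neighborhood $W$ of $0$ there is a neighborhood $U$ of $0$ such that $x-x'\in U$, $y-y'\in U$ imply $g(x,y)-g(x',y')\in W$. *)

theory Defs
  imports "HOL-Analysis.Analysis"
begin

text \<open>Orders are given as relations on a real vector space 'a.
  le = initial order (\<le>), sle = specific order (\<preccurlyeq>).\<close>

definition partial_order_rel :: "('a \<Rightarrow> 'a \<Rightarrow> bool) \<Rightarrow> bool" where
  "partial_order_rel r \<longleftrightarrow> (\<forall>x. r x x) \<and> (\<forall>x y. r x y \<and> r y x \<longrightarrow> x = y)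
     \<and> (\<forall>x y z. r x y \<and> r y z \<longrightarrow> r x z)"

definition ordered_vector_space :: "('a::real_vector \<Rightarrow> 'a \<Rightarrow> bool) \<Rightarrow> bool" where
  "ordered_vector_space r \<longleftrightarrow> partial_order_rel r
     \<and> (\<forall>x y z. r x y \<longrightarrow> r (x + z) (y + z))
     \<and> (\<forall>x y (c::real). r x y \<and> 0 \<le> c \<longrightarrow> r (c *\<^sub>R x) (c *\<^sub>R y))"

definition is_least_rel :: "('a \<Rightarrow> 'a \<Rightarrow> bool) \<Rightarrow> 'a set \<Rightarrow> 'a \<Rightarrow> bool" where
  "is_least_rel r A m \<longleftrightarrow> m \<in> A \<and> (\<forall>w\<in>A. r m w)"

definition is_greatest_rel :: "('a \<Rightarrow> 'a \<Rightarrow> bool) \<Rightarrow> 'a set \<Rightarrow> 'a \<Rightarrow> bool" where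
  "is_greatest_rel r A m \<longleftrightarrow> m \<in> A \<and> (\<forall>w\<in>A. r w m)"

definition mixed_upper :: "('a \<Rightarrow> 'a \<Rightarrow> bool) \<Rightarrow> ('a \<Rightarrow> 'a \<Rightarrow> bool) \<Rightarrow> 'a \<Rightarrow> 'a \<Rightarrow> 'a" where
  "mixed_upper le sle x y = (THE m. is_least_rel le {w. sle x w \<and> le y w} m)"

definition mixed_lower :: "('a \<Rightarrow> 'a \<Rightarrow> bool) \<Rightarrow> ('a \<Rightarrow> 'a \<Rightarrow> bool) \<Rightarrow> 'a \<Rightarrow> 'a \<Rightarrow> 'a" where
  "mixed_lower le sle x y = (THE m. is_greatest_rel le {w. sle w x \<and> le w y} m)"

definition mixed_lattice_vector_space ::
  "('a::real_vector \<Rightarrow> 'a \<Rightarrow> bool) \<Rightarrow> ('a \<Rightarrow> 'a \<Rightarrow> bool) \<Rightarrow> bool" where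
  "mixed_lattice_vector_space le sle \<longleftrightarrow>
     ordered_vector_space le \<and> ordered_vector_space sle
     \<and> (\<forall>x y. \<exists>m. is_least_rel le {w. sle x w \<and> le y w} m)
     \<and> (\<forall>x y. \<exists>m. is_greatest_rel le {w. sle w x \<and> le w y} m)
     \<and> (\<forall>x y. sle x y \<longrightarrow> le x y)
     \<and> (\<forall>x y. sle 0 x \<and> sle 0 y \<longrightarrow>
           sle 0 (mixed_upper le sle x y) \<and> sle 0 (mixed_lower le sle x y))"

definition vector_topology :: "'a::real_vector topology \<Rightarrow> bool" where
  "vector_topology T \<longleftrightarrow> topspace T = UNIV
     \<and> continuous_map (prod_topology T T) T (\<lambda>(x, y). x + y)
     \<and> continuous_map (prod_topology euclideanreal T) T (\<lambda>(c, x). c *\<^sub>R x)"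

definition nbhd0 :: "'a::real_vector topology \<Rightarrow> 'a set \<Rightarrow> bool" where
  "nbhd0 T N \<longleftrightarrow> (\<exists>U. openin T U \<and> 0 \<in> U \<and> U \<subseteq> N)"

definition s_abs :: "('a::real_vector \<Rightarrow> 'a \<Rightarrow> bool) \<Rightarrow> ('a \<Rightarrow> 'a \<Rightarrow> bool) \<Rightarrow> 'a \<Rightarrow> 'a" where
  "s_abs le sle x = mixed_upper le sle 0 x + mixed_upper le sle 0 (- x)"

definition symmetric_solid :: "('a::real_vector \<Rightarrow> 'a \<Rightarrow> bool) \<Rightarrow> ('a \<Rightarrow> 'a \<Rightarrow> bool) \<Rightarrow> 'a set \<Rightarrow> bool" where
  "symmetric_solid le sle A \<longleftrightarrow>
     (\<forall>x y. x \<in> A \<and> le (s_abs le sle y) (s_abs le sle x) \<longrightarrow> y \<in> A)"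

definition le_full :: "('a \<Rightarrow> 'a \<Rightarrow> bool) \<Rightarrow> 'a set \<Rightarrow> bool" where
  "le_full le A \<longleftrightarrow> (\<forall>x y z. x \<in> A \<and> y \<in> A \<and> le y z \<and> le z x \<longrightarrow> z \<in> A)"

definition locally_symmetric_solid ::
  "'a::real_vector topology \<Rightarrow> ('a \<Rightarrow> 'a \<Rightarrow> bool) \<Rightarrow> ('a \<Rightarrow> 'a \<Rightarrow> bool) \<Rightarrow> bool" where
  "locally_symmetric_solid T le sle \<longleftrightarrow>
     (\<forall>N. nbhd0 T N \<longrightarrow> (\<exists>W. nbhd0 T W \<and> W \<subseteq> N \<and> symmetric_solid le sle W))"

definition locally_le_full :: "'a::real_vector topology \<Rightarrow> ('a \<Rightarrow> 'a \<Rightarrow> bool) \<Rightarrow> bool" where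
  "locally_le_full T le \<longleftrightarrow>
     (\<forall>N. nbhd0 T N \<longrightarrow> (\<exists>W. nbhd0 T W \<and> W \<subseteq> N \<and> le_full le W))"

definition locally_mixed_full ::
  "'a::real_vector topology \<Rightarrow> ('a \<Rightarrow> 'a \<Rightarrow> bool) \<Rightarrow> ('a \<Rightarrow> 'a \<Rightarrow> bool) \<Rightarrow> bool" where
  "locally_mixed_full T le sle \<longleftrightarrow>
     (\<forall>N. nbhd0 T N \<longrightarrow> (\<exists>W. nbhd0 T W \<and> W \<subseteq> N \<and>
        (\<forall>x y. y \<in> W \<and> sle 0 x \<and> le x y \<longrightarrow> x \<in> W)))"

definition continuous_at_zero2 :: "'a::real_vector topology \<Rightarrow> ('a \<Rightarrow> 'a \<Rightarrow> 'a) \<Rightarrow> bool" where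
  "continuous_at_zero2 T g \<longleftrightarrow>
     limitin T (\<lambda>(x, y). g x y) (g 0 0) (nhdsin (prod_topology T T) (0, 0))"

definition uniformly_continuous2 :: "'a::real_vector topology \<Rightarrow> ('a \<Rightarrow> 'a \<Rightarrow> 'a) \<Rightarrow> bool" where
  "uniformly_continuous2 T g \<longleftrightarrow>
     (\<forall>W. nbhd0 T W \<longrightarrow> (\<exists>U. nbhd0 T U \<and>
        (\<forall>x x' y y'. x - x' \<in> U \<and> y - y' \<in> U \<longrightarrow> g x y - g x' y' \<in> W)))"

end

theory Submission
  imports Defs
begin

locale mlvs =
  fixes le sle :: "'a::real_vector \<Rightarrow> 'a \<Rightarrow> bool"
  assumes mlvs: "mixed_lattice_vector_space le sle"
begin

lemma ovs_le: "ordered_vector_space le" and ovs_sle: "ordered_vector_space sle"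
  using mlvs by (auto simp: mixed_lattice_vector_space_def)

lemma po_le: "partial_order_rel le" and po_sle: "partial_order_rel sle"
  and add_le: "\<forall>x y z. le x y \<longrightarrow> le (x + z) (y + z)"
  and add_sle: "\<forall>x y z. sle x y \<longrightarrow> sle (x + z) (y + z)"
  using ovs_le ovs_sle unfolding ordered_vector_space_def by auto

lemma po_parts: "\<forall>x. le x x" "\<forall>x y. le x y \<and> le y x \<longrightarrow> x = y"
   "\<forall>x y z. le x y \<and> le y z \<longrightarrow> le x z"
  apply (insert po_le[unfolded partial_order_rel_def]) apply (elim conjE, assumption)+ done
lemma spo_parts: "\<forall>x. sle x x" "\<forall>x y z. sle x y \<and> sle y z \<longrightarrow> sle x z"
  apply (insert po_sle[unfolded partial_order_rel_def]) apply (elim conjE, assumption)+ done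

lemma le_refl: "le x x" using po_parts(1) by (rule spec)
lemma le_antisym: "le x y \<Longrightarrow> le y x \<Longrightarrow> x = y"
  using po_parts(2)[rule_format, of x y] by blast
lemma le_trans: "le x y \<Longrightarrow> le y z \<Longrightarrow> le x z"
  using po_parts(3)[rule_format, of x y z] by blast
lemma le_add: "le x y \<Longrightarrow> le (x + z) (y + z)" using add_le[rule_format, of x y z] by blast
lemma sle_refl: "sle x x" using spo_parts(1) by (rule spec)
lemma sle_trans: "sle x y \<Longrightarrow> sle y z \<Longrightarrow> sle x z"
  using spo_parts(2)[rule_format, of x y z] by blast
lemma sle_add: "sle x y \<Longrightarrow> sle (x + z) (y + z)" using add_sle[rule_format, of x y z] by blast
lemma sle_le_all: "\<forall>x y. sle x y \<longrightarrow> le x y"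
  apply (insert mlvs[unfolded mixed_lattice_vector_space_def]) apply (elim conjE, assumption) done
lemma sle_le: "sle x y \<Longrightarrow> le x y" using sle_le_all by blast

lemma le_shift: assumes "le a b" "b - a = d - c" shows "le c d"
proof -
  have "le (a + (c - a)) (b + (c - a))" using le_add[OF assms(1)] .
  moreover have "b + (c - a) = d" using assms(2) by (metis add.commute diff_add_cancel diff_diff_eq2)
  ultimately show ?thesis by simp
qed

lemma sle_shift: assumes "sle a b" "b - a = d - c" shows "sle c d"
proof -
  have "sle (a + (c - a)) (b + (c - a))" using sle_add[OF assms(1)] .
  moreover have "b + (c - a) = d" using assms(2) by (metis add.commute diff_add_cancel diff_diff_eq2)
  ultimately show ?thesis by simp
qed

lemma le_add2: assumes "le a b" "le c d" shows "le (a + c) (b + d)"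
proof -
  have "le (a + c) (b + c)" using le_add[OF assms(1)] .
  moreover have "le (b + c) (b + d)" by (rule le_shift[OF assms(2)]) (simp add: algebra_simps)
  ultimately show ?thesis by (rule le_trans)
qed

lemma sle_add2: assumes "sle a b" "sle c d" shows "sle (a + c) (b + d)"
proof -
  have "sle (a + c) (b + c)" using sle_add[OF assms(1)] .
  moreover have "sle (b + c) (b + d)" by (rule sle_shift[OF assms(2)]) (simp add: algebra_simps)
  ultimately show ?thesis by (rule sle_trans)
qed

lemma le_neg: "le a b \<Longrightarrow> le (- b) (- a)"
  by (erule le_shift) simp

abbreviation "mu \<equiv> mixed_upper le sle"
abbreviation "ml \<equiv> mixed_lower le sle"

lemma mu_is: "is_least_rel le {w. sle x w \<and> le y w} (mu x y)"
proof -
  obtain m where m: "is_least_rel le {w. sle x w \<and> le y w} m"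
    using mlvs unfolding mixed_lattice_vector_space_def by blast
  have "\<exists>!m. is_least_rel le {w. sle x w \<and> le y w} m"
    using m le_antisym unfolding is_least_rel_def by blast
  then show ?thesis unfolding mixed_upper_def by (rule theI')
qed

lemma ml_is: "is_greatest_rel le {w. sle w x \<and> le w y} (ml x y)"
proof -
  obtain m where m: "is_greatest_rel le {w. sle w x \<and> le w y} m"
    using mlvs unfolding mixed_lattice_vector_space_def by blast
  have "\<exists>!m. is_greatest_rel le {w. sle w x \<and> le w y} m"
    using m le_antisym unfolding is_greatest_rel_def by blast
  then show ?thesis unfolding mixed_lower_def by (rule theI')
qed

lemma mu_sle: "sle x (mu x y)" and mu_le: "le y (mu x y)"
  and mu_least: "sle x w \<Longrightarrow> le y w \<Longrightarrow> le (mu x y) w"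
  using mu_is[of x y] unfolding is_least_rel_def by auto

lemma ml_sle: "sle (ml x y) x" and ml_le: "le (ml x y) y"
  and ml_greatest: "sle w x \<Longrightarrow> le w y \<Longrightarrow> le w (ml x y)"
  using ml_is[of x y] unfolding is_greatest_rel_def by auto

lemma mu_eqI: assumes "sle x m" "le y m" "\<And>w. sle x w \<Longrightarrow> le y w \<Longrightarrow> le m w"
  shows "mu x y = m"
  by (rule le_antisym) (auto intro: assms mu_least mu_sle mu_le)

lemma ml_eqI: assumes "sle m x" "le m y" "\<And>w. sle w x \<Longrightarrow> le w y \<Longrightarrow> le w m"
  shows "ml x y = m"
  by (rule le_antisym) (auto intro: assms ml_greatest ml_sle ml_le)

lemma mu_translate: "mu (x + z) (y + z) = mu x y + z"
proof (rule mu_eqI)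
  show "sle (x + z) (mu x y + z)" using sle_add[OF mu_sle] .
  show "le (y + z) (mu x y + z)" using le_add[OF mu_le] .
  fix w assume "sle (x + z) w" "le (y + z) w"
  then have "sle x (w - z)" "le y (w - z)"
    using sle_shift[where a="x + z" and b=w and c=x and d="w - z"] le_shift[where a="y + z" and b=w and c=y and d="w - z"] by auto
  then have "le (mu x y) (w - z)" by (rule mu_least)
  then show "le (mu x y + z) w" by (rule le_shift) simp
qed

lemma ml_mu: "ml x y = x + y - mu y x"
proof (rule ml_eqI)
  show "sle (x + y - mu y x) x" using mu_sle[of y x] by (rule sle_shift) simp
  show "le (x + y - mu y x) y" using mu_le[of x y] by (rule le_shift) simp
  fix w assume "sle w x" "le w y"
  then have "sle y (x + y - w)" "le x (x + y - w)"
    using sle_shift[where a=w and b=x and c=y and d="x + y - w"] le_shift[where a=w and b=y and c=x and d="x + y - w"] by auto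
  then have "le (mu y x) (x + y - w)" by (rule mu_least)
  then show "le w (x + y - mu y x)" by (rule le_shift) simp
qed

abbreviation "u x \<equiv> mu 0 x"

lemma mu_u: "mu x y = x + u (y - x)"
  using mu_translate[of 0 x "y - x"] by (simp add: algebra_simps)

lemma u_sle: "sle 0 (u x)" by (rule mu_sle)
lemma u_ge: "le x (u x)" by (rule mu_le)
lemma u_nonneg: "le 0 (u x)" using sle_le[OF u_sle] .
lemma u_mono: "le x y \<Longrightarrow> le (u x) (u y)"
  by (rule mu_least[OF u_sle]) (rule le_trans[OF _ u_ge])
lemma u_pos: assumes "sle 0 x" shows "u x = x"
proof (rule mu_eqI)
  show "sle 0 x" by (rule assms)
  show "le x x" by (rule le_refl)
  fix w assume "le x w" then show "le x w" .
qed
lemma u_neg: assumes "le x 0" shows "u x = 0"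
proof (rule mu_eqI)
  show "sle 0 0" by (rule sle_refl)
  show "le x 0" by (rule assms)
  fix w assume "sle 0 w" then show "le 0 w" by (rule sle_le)
qed
lemma u_subadd: "le (u (a + b)) (u a + u b)"
proof (rule mu_least)
  show "sle 0 (u a + u b)" using sle_add2[OF u_sle u_sle, of a b] by simp
  show "le (a + b) (u a + u b)" using le_add2[OF u_ge u_ge] .
qed

abbreviation "s x \<equiv> s_abs le sle x"

lemma s_eq: "s x = u x + u (- x)" by (simp add: s_abs_def)
lemma s_sle: "sle 0 (s x)" using sle_add2[OF u_sle u_sle] by (simp add: s_eq)
lemma s_neg: "s (- x) = s x" by (simp add: s_eq add.commute)
lemma s_pos: assumes "sle 0 w" shows "s w = w"
proof -
  have "le (- w) 0" using le_neg[OF sle_le[OF assms]] by simp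
  then show ?thesis using u_pos[OF assms] u_neg by (simp add: s_eq)
qed
lemma s_s: "s (s x) = s x" by (rule s_pos[OF s_sle])
lemma s_ge: "le x (s x)" using le_add2[OF u_ge u_nonneg, of x "- x"] by (simp add: s_eq)
lemma s_ge_neg: "le (- s x) x"
  using le_neg[OF s_ge[of "- x"]] by (simp add: s_neg)
lemma s_tri: "le (s (a + b)) (s a + s b)"
proof -
  have "le (u (a + b)) (u a + u b)" by (rule u_subadd)
  moreover have "le (u (- (a + b))) (u (- a) + u (- b))" using u_subadd[of "- a" "- b"] by simp
  ultimately have "le (u (a + b) + u (- (a + b))) ((u a + u b) + (u (- a) + u (- b)))"
    by (rule le_add2)
  then show ?thesis by (simp add: s_eq algebra_simps)
qed
lemma s_u: "le (s (u a)) (s a)"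
proof -
  have e: "s (u a) = u a" by (rule s_pos[OF u_sle])
  show ?thesis using le_add2[OF le_refl u_nonneg, of "u a" "- a"] unfolding e by (simp add: s_eq)
qed

lemma u_diff: "le (u a - u b) (u (a - b))"
  using u_subadd[of "a - b" b] by (rule le_shift) simp

lemma s_u_diff: "le (s (u a - u b)) (s (a - b))"
proof -
  have "le (u (u a - u b)) (u (u (a - b)))" by (rule u_mono[OF u_diff])
  then have 1: "le (u (u a - u b)) (u (a - b))" by (simp add: u_pos[OF u_sle])
  have "le (u (u b - u a)) (u (u (b - a)))" by (rule u_mono[OF u_diff])
  then have 2: "le (u (- (u a - u b))) (u (- (a - b)))" by (simp add: u_pos[OF u_sle])
  show ?thesis using le_add2[OF 1 2] by (simp add: s_eq)
qed

end

locale tmlvs = mlvs le sle for le sle :: "'a::real_vector \<Rightarrow> 'a \<Rightarrow> bool" +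
  fixes T :: "'a topology"
  assumes vt: "vector_topology T"
begin

lemma top_univ: "topspace T = UNIV" using vt by (simp add: vector_topology_def)
lemma add_cont: "continuous_map (prod_topology T T) T (\<lambda>(x, y). x + y)"
  using vt by (simp add: vector_topology_def)
lemma smul_cont: "continuous_map (prod_topology euclideanreal T) T (\<lambda>(c, x). c *\<^sub>R x)"
  using vt by (simp add: vector_topology_def)

lemma nbhd0_0: "nbhd0 T N \<Longrightarrow> 0 \<in> N" unfolding nbhd0_def by blast
lemma nbhd0_mono: "nbhd0 T N \<Longrightarrow> N \<subseteq> M \<Longrightarrow> nbhd0 T M" unfolding nbhd0_def by blast
lemma nbhd0_Int: "nbhd0 T N \<Longrightarrow> nbhd0 T M \<Longrightarrow> nbhd0 T (N \<inter> M)"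
  unfolding nbhd0_def by (metis Int_mono IntI openin_Int)
lemma nbhd0_open: "openin T U \<Longrightarrow> 0 \<in> U \<Longrightarrow> nbhd0 T U" unfolding nbhd0_def by blast

lemma nbhd0_add: assumes "nbhd0 T N"
  shows "\<exists>V. nbhd0 T V \<and> (\<forall>x\<in>V. \<forall>y\<in>V. x + y \<in> N)"
proof -
  obtain U where U: "openin T U" "0 \<in> U" "U \<subseteq> N" using assms unfolding nbhd0_def by blast
  define S where "S = {z \<in> topspace (prod_topology T T). (\<lambda>(x, y). x + y) z \<in> U}"
  have opS: "openin (prod_topology T T) S"
    unfolding S_def by (rule openin_continuous_map_preimage[OF add_cont U(1)])
  have z: "(0, 0) \<in> S" using U(2) by (simp add: S_def top_univ)
  obtain A B where AB: "openin T A" "openin T B" "0 \<in> A" "0 \<in> B" "A \<times> B \<subseteq> S"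
    using openin_prod_topology_alt[THEN iffD1, OF opS, rule_format, OF z] by (elim exE conjE)
  have "openin T (A \<inter> B)" using AB(1,2) by (rule openin_Int)
  moreover have "0 \<in> A \<inter> B" using AB(3,4) by blast
  ultimately have "nbhd0 T (A \<inter> B)" by (rule nbhd0_open)
  moreover have "\<forall>x\<in>A \<inter> B. \<forall>y\<in>A \<inter> B. x + y \<in> N"
  proof (intro ballI)
    fix x y assume "x \<in> A \<inter> B" "y \<in> A \<inter> B"
    then have "(x, y) \<in> S" using AB(5) by blast
    then have "x + y \<in> U" unfolding S_def by simp
    then show "x + y \<in> N" using U(3) by blast
  qed
  ultimately show ?thesis by blast
qed

lemma neg_cont: "continuous_map T T (\<lambda>x. - x)"
proof -
  have "continuous_map T (prod_topology euclideanreal T) (\<lambda>x. (-1::real, x))"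
    unfolding continuous_map_pairwise by (simp add: o_def)
  then have "continuous_map T T ((\<lambda>(c, x). c *\<^sub>R x) \<circ> (\<lambda>x. (-1::real, x)))"
    using smul_cont by (rule continuous_map_compose)
  moreover have "((\<lambda>(c, x). c *\<^sub>R x) \<circ> (\<lambda>x. (-1::real, x))) = (\<lambda>x::'a. - x)"
    by (rule ext) simp
  ultimately show ?thesis by simp
qed

lemma nbhd0_neg: assumes "nbhd0 T N" shows "nbhd0 T {x. - x \<in> N}"
proof -
  obtain U where U: "openin T U" "0 \<in> U" "U \<subseteq> N" using assms unfolding nbhd0_def by blast
  have "openin T {x \<in> topspace T. - x \<in> U}"
    by (rule openin_continuous_map_preimage[OF neg_cont U(1)])
  moreover have "0 \<in> {x \<in> topspace T. - x \<in> U}" using U(2) by (simp add: top_univ)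
  moreover have "{x \<in> topspace T. - x \<in> U} \<subseteq> {x. - x \<in> N}" using U(3) by blast
  ultimately show ?thesis unfolding nbhd0_def by blast
qed

lemma ss_mem: "symmetric_solid le sle W \<Longrightarrow> x \<in> W \<Longrightarrow> le (s y) (s x) \<Longrightarrow> y \<in> W"
  unfolding symmetric_solid_def by blast

lemma ss_neg: "symmetric_solid le sle W \<Longrightarrow> x \<in> W \<Longrightarrow> - x \<in> W"
  by (erule ss_mem, assumption) (simp add: s_neg le_refl)

lemma lss_get: "locally_symmetric_solid T le sle \<Longrightarrow> nbhd0 T N \<Longrightarrow>
    \<exists>W. nbhd0 T W \<and> W \<subseteq> N \<and> symmetric_solid le sle W"
  unfolding locally_symmetric_solid_def by blast

lemma A_unif_mu: assumes A: "locally_symmetric_solid T le sle"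
  shows "uniformly_continuous2 T mu"
  unfolding uniformly_continuous2_def
proof (intro allI impI)
  fix N assume N: "nbhd0 T N"
  obtain V where V: "nbhd0 T V" "\<forall>a\<in>V. \<forall>b\<in>V. a + b \<in> N" using nbhd0_add[OF N] by blast
  obtain V1 where V1: "nbhd0 T V1" "V1 \<subseteq> V" "symmetric_solid le sle V1"
    using lss_get[OF A V(1)] by blast
  obtain V2 where V2: "nbhd0 T V2" "\<forall>a\<in>V2. \<forall>b\<in>V2. a + b \<in> V1" using nbhd0_add[OF V1(1)] by blast
  obtain U where U: "nbhd0 T U" "U \<subseteq> V2" "symmetric_solid le sle U"
    using lss_get[OF A V2(1)] by blast
  have z: "0 \<in> V2" using nbhd0_0[OF V2(1)] .
  show "\<exists>U. nbhd0 T U \<and> (\<forall>x x' y y'. x - x' \<in> U \<and> y - y' \<in> U \<longrightarrow> mu x y - mu x' y' \<in> N)"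
  proof (intro exI conjI allI impI)
    show "nbhd0 T U" by (rule U(1))
    fix x x' y y' assume h: "x - x' \<in> U \<and> y - y' \<in> U"
    have "(x - x') + 0 \<in> V1" using h U(2) z V2(2) by blast
    then have 1: "x - x' \<in> V" using V1(2) by auto
    have "- (x - x') \<in> U" using ss_neg[OF U(3)] h by blast
    then have yy: "(y - y') + (- (x - x')) \<in> V1" using h U(2) V2(2) by blast
    have e: "(y - x) - (y' - x') = (y - y') + (- (x - x'))" by (simp add: algebra_simps)
    have "(y - x) - (y' - x') \<in> V1" unfolding e by (rule yy)
    then have "u (y - x) - u (y' - x') \<in> V1" by (rule ss_mem[OF V1(3) _ s_u_diff])
    then have 2: "u (y - x) - u (y' - x') \<in> V" using V1(2) by auto
    have "mu x y - mu x' y' = (x - x') + (u (y - x) - u (y' - x'))"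
      by (simp add: mu_u[of x y] mu_u[of x' y'] algebra_simps)
    then show "mu x y - mu x' y' \<in> N" using V(2) 1 2 by simp
  qed
qed

lemma unif_ml: assumes M: "uniformly_continuous2 T mu"
  shows "uniformly_continuous2 T ml"
  unfolding uniformly_continuous2_def
proof (intro allI impI)
  fix N assume N: "nbhd0 T N"
  obtain V where V: "nbhd0 T V" "\<forall>a\<in>V. \<forall>b\<in>V. a + b \<in> N" using nbhd0_add[OF N] by blast
  obtain V' where V': "nbhd0 T V'" "\<forall>a\<in>V'. \<forall>b\<in>V'. a + b \<in> V" using nbhd0_add[OF V(1)] by blast
  have W1: "nbhd0 T {z. - z \<in> V}" by (rule nbhd0_neg[OF V(1)])
  obtain U1 where U1: "nbhd0 T U1"
    "\<forall>x x' y y'. x - x' \<in> U1 \<and> y - y' \<in> U1 \<longrightarrow> mu x y - mu x' y' \<in> {z. - z \<in> V}"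
    using M W1 unfolding uniformly_continuous2_def by blast
  show "\<exists>U. nbhd0 T U \<and> (\<forall>x x' y y'. x - x' \<in> U \<and> y - y' \<in> U \<longrightarrow> ml x y - ml x' y' \<in> N)"
  proof (intro exI conjI allI impI)
    show "nbhd0 T (U1 \<inter> V')" by (rule nbhd0_Int[OF U1(1) V'(1)])
    fix x x' y y' assume h: "x - x' \<in> U1 \<inter> V' \<and> y - y' \<in> U1 \<inter> V'"
    have 1: "(x - x') + (y - y') \<in> V" using h V'(2) by blast
    have "mu y x - mu y' x' \<in> {z. - z \<in> V}" using h U1(2) by blast
    then have 2: "- (mu y x - mu y' x') \<in> V" by simp
    have "ml x y - ml x' y' = ((x - x') + (y - y')) + (- (mu y x - mu y' x'))"
      by (simp add: ml_mu algebra_simps)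
    then show "ml x y - ml x' y' \<in> N" using V(2) 1 2 by simp
  qed
qed

lemma unif_cont: assumes g: "uniformly_continuous2 T g" and g0: "g 0 0 = 0"
  shows "continuous_at_zero2 T g"
  unfolding continuous_at_zero2_def limitin_def
proof (intro conjI allI impI)
  show "g 0 0 \<in> topspace T" by (simp add: top_univ)
  fix U assume U: "openin T U \<and> g 0 0 \<in> U"
  then have "nbhd0 T U" using g0 by (intro nbhd0_open) auto
  then obtain V where V: "nbhd0 T V" "\<forall>x x' y y'. x - x' \<in> V \<and> y - y' \<in> V \<longrightarrow> g x y - g x' y' \<in> U"
    using g unfolding uniformly_continuous2_def by blast
  obtain V0 where V0: "openin T V0" "0 \<in> V0" "V0 \<subseteq> V" using V(1) unfolding nbhd0_def by blast
  have "openin (prod_topology T T) (V0 \<times> V0)" using V0(1) by (simp add: openin_prod_Times_iff)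
  moreover have "(0, 0) \<in> V0 \<times> V0" using V0(2) by simp
  moreover have "\<forall>z\<in>V0 \<times> V0. (\<lambda>(x, y). g x y) z \<in> U"
  proof
    fix z assume "z \<in> V0 \<times> V0"
    then obtain x y where z: "z = (x, y)" "x \<in> V" "y \<in> V" using V0(3) by auto
    then have "g x y - g 0 0 \<in> U" using V(2) by fastforce
    then show "(\<lambda>(x, y). g x y) z \<in> U" using z g0 by simp
  qed
  ultimately show "\<forall>\<^sub>F z in nhdsin (prod_topology T T) (0, 0). (\<lambda>(x, y). g x y) z \<in> U"
    unfolding eventually_nhdsin by blast
qed

lemma mu00: "mu 0 0 = 0" by (rule u_pos[OF sle_refl])
lemma ml00: "ml 0 0 = 0" by (simp add: ml_mu mu00)

lemma u_le_s: "le (u x) (s x)"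
  using le_add2[OF le_refl u_nonneg, of "u x" "- x"] by (simp add: s_eq)
lemma u_neg_le_s: "le (u (- x)) (s x)"
  using le_add2[OF u_nonneg[of x] le_refl[of "u (- x)"]] by (simp add: s_eq)

lemma A_full: assumes A: "locally_symmetric_solid T le sle"
  shows "locally_le_full T le"
  unfolding locally_le_full_def
proof (intro allI impI)
  fix N assume N: "nbhd0 T N"
  obtain W' where W': "nbhd0 T W'" "W' \<subseteq> N" "symmetric_solid le sle W'"
    using lss_get[OF A N] by blast
  obtain V where V: "nbhd0 T V" "\<forall>a\<in>V. \<forall>b\<in>V. a + b \<in> W'" using nbhd0_add[OF W'(1)] by blast
  obtain V' where V': "nbhd0 T V'" "V' \<subseteq> V" "symmetric_solid le sle V'"
    using lss_get[OF A V(1)] by blast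
  define F where "F = {z. \<exists>x\<in>V'. \<exists>y\<in>V'. le y z \<and> le z x}"
  have "V' \<subseteq> F" unfolding F_def using le_refl by blast
  then have 1: "nbhd0 T F" using nbhd0_mono[OF V'(1)] by blast
  have 2: "le_full le F" unfolding le_full_def
  proof (intro allI impI)
    fix x y z assume h: "x \<in> F \<and> y \<in> F \<and> le y z \<and> le z x"
    obtain x1 where x1: "x1 \<in> V'" "le x x1" using h unfolding F_def by blast
    obtain y2 where y2: "y2 \<in> V'" "le y2 y" using h unfolding F_def by blast
    have "le y2 z" by (rule le_trans[OF y2(2)]) (use h in blast)
    moreover have "le z x1" by (rule le_trans[OF _ x1(2)]) (use h in blast)
    ultimately show "z \<in> F" unfolding F_def using x1(1) y2(1) by blast
  qed
  have 3: "F \<subseteq> N"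
  proof
    fix z assume "z \<in> F"
    then obtain x y where xy: "x \<in> V'" "y \<in> V'" "le y z" "le z x" unfolding F_def by blast
    have a: "le (u z) (s x)" by (rule le_trans[OF u_mono[OF xy(4)] u_le_s])
    have b: "le (u (- z)) (s y)" by (rule le_trans[OF u_mono[OF le_neg[OF xy(3)]] u_neg_le_s])
    have c: "le (s z) (s x + s y)" using le_add2[OF a b] by (simp add: s_eq)
    have d: "s (s x + s y) = s x + s y" by (rule s_pos[OF sle_add2[OF s_sle s_sle, simplified]])
    have "s x \<in> V'" by (rule ss_mem[OF V'(3) xy(1)]) (simp add: s_s le_refl)
    moreover have "s y \<in> V'" by (rule ss_mem[OF V'(3) xy(2)]) (simp add: s_s le_refl)
    ultimately have "s x + s y \<in> W'" using V'(2) V(2) by blast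
    then have "z \<in> W'" by (rule ss_mem[OF W'(3)]) (simp add: d c)
    then show "z \<in> N" using W'(2) by blast
  qed
  show "\<exists>W. nbhd0 T W \<and> W \<subseteq> N \<and> le_full le W" using 1 2 3 by blast
qed

lemma cont_u: assumes C: "continuous_at_zero2 T mu" and N: "nbhd0 T N"
  shows "\<exists>V. nbhd0 T V \<and> (\<forall>y\<in>V. u y \<in> N)"
proof -
  obtain U where U: "openin T U" "0 \<in> U" "U \<subseteq> N" using N unfolding nbhd0_def by blast
  have "\<forall>\<^sub>F z in nhdsin (prod_topology T T) (0, 0). (\<lambda>(x, y). mu x y) z \<in> U"
    using C U unfolding continuous_at_zero2_def limitin_def by (simp add: mu00)
  then obtain S where S: "openin (prod_topology T T) S" "(0, 0) \<in> S"
      "\<forall>z\<in>S. (\<lambda>(x, y). mu x y) z \<in> U"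
    unfolding eventually_nhdsin by (auto simp: top_univ)
  then obtain A B where AB: "openin T A" "openin T B" "0 \<in> A" "0 \<in> B" "A \<times> B \<subseteq> S"
    using openin_prod_topology_alt[THEN iffD1, OF S(1), rule_format, OF S(2)] by (elim exE conjE)
  have "nbhd0 T B" using AB by (intro nbhd0_open) auto
  moreover have "\<forall>y\<in>B. u y \<in> N"
  proof
    fix y assume "y \<in> B"
    then have "(0, y) \<in> S" using AB by blast
    then show "u y \<in> N" using S(3) U(3) by fastforce
  qed
  ultimately show ?thesis by blast
qed

lemma B_A: assumes F: "locally_le_full T le" and C: "continuous_at_zero2 T mu"
  shows "locally_symmetric_solid T le sle"
  unfolding locally_symmetric_solid_def
proof (intro allI impI)
  fix N assume N: "nbhd0 T N"
  obtain W where W: "nbhd0 T W" "W \<subseteq> N" "le_full le W"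
    using F N unfolding locally_le_full_def by blast
  define W' where "W' = W \<inter> {x. - x \<in> W}"
  have W'n: "nbhd0 T W'" unfolding W'_def by (rule nbhd0_Int[OF W(1) nbhd0_neg[OF W(1)]])
  obtain W1 where W1: "nbhd0 T W1" "\<forall>a\<in>W1. \<forall>b\<in>W1. a + b \<in> W'" using nbhd0_add[OF W'n] by blast
  obtain V0 where V0: "nbhd0 T V0" "\<forall>y\<in>V0. u y \<in> W1" using cont_u[OF C W1(1)] by blast
  define V where "V = V0 \<inter> {x. - x \<in> V0}"
  have Vn: "nbhd0 T V" unfolding V_def by (rule nbhd0_Int[OF V0(1) nbhd0_neg[OF V0(1)]])
  define S where "S = {y. \<exists>x\<in>V. le (s y) (s x)}"
  have "V \<subseteq> S" unfolding S_def using le_refl by blast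
  then have 1: "nbhd0 T S" using nbhd0_mono[OF Vn] by blast
  have 2: "symmetric_solid le sle S" unfolding symmetric_solid_def
  proof (intro allI impI)
    fix x y assume h: "x \<in> S \<and> le (s y) (s x)"
    then obtain x0 where x0: "x0 \<in> V" "le (s x) (s x0)" unfolding S_def by blast
    have "le (s y) (s x0)" using le_trans[OF _ x0(2)] h by blast
    then show "y \<in> S" unfolding S_def using x0(1) by blast
  qed
  have 3: "S \<subseteq> N"
  proof
    fix y assume "y \<in> S"
    then obtain x where x: "x \<in> V" "le (s y) (s x)" unfolding S_def by blast
    have "u x \<in> W1" "u (- x) \<in> W1" using x(1) V0(2) unfolding V_def by auto
    then have "s x \<in> W'" using W1(2) by (simp add: s_eq)
    then have sx: "s x \<in> W" "- s x \<in> W" unfolding W'_def by auto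
    have lo: "le (- s x) y" by (rule le_trans[OF le_neg[OF x(2)] s_ge_neg])
    have hi: "le y (s x)" by (rule le_trans[OF s_ge x(2)])
    have "y \<in> W" using W(3) sx lo hi unfolding le_full_def by blast
    then show "y \<in> N" using W(2) by blast
  qed
  show "\<exists>W. nbhd0 T W \<and> W \<subseteq> N \<and> symmetric_solid le sle W" using 1 2 3 by blast
qed

lemma ml_pos: assumes "sle 0 x" "le x y" shows "ml x y = x"
proof (rule ml_eqI)
  show "sle x x" by (rule sle_refl)
  show "le x y" by (rule assms(2))
  fix w assume "sle w x" then show "le w x" by (rule sle_le)
qed

lemma ml_pos0: assumes "sle 0 x" shows "ml x 0 = 0"
proof (rule ml_eqI)
  show "sle 0 x" by (rule assms)
  show "le 0 0" by (rule le_refl)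
  fix w assume "le w 0" then show "le w 0" .
qed

lemma C_D: assumes M: "uniformly_continuous2 T ml"
  shows "locally_mixed_full T le sle"
  unfolding locally_mixed_full_def
proof (intro allI impI)
  fix N assume N: "nbhd0 T N"
  obtain U where U: "nbhd0 T U"
    "\<forall>x x' y y'. x - x' \<in> U \<and> y - y' \<in> U \<longrightarrow> ml x y - ml x' y' \<in> N"
    using M N unfolding uniformly_continuous2_def by blast
  define M' where "M' = U \<inter> N"
  have M'n: "nbhd0 T M'" unfolding M'_def by (rule nbhd0_Int[OF U(1) N])
  define W where "W = {x. \<exists>y\<in>M'. x = y \<or> (sle 0 x \<and> le x y)}"
  have "M' \<subseteq> W" unfolding W_def by blast
  then have 1: "nbhd0 T W" using nbhd0_mono[OF M'n] by blast
  have 2: "W \<subseteq> N"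
  proof
    fix x assume "x \<in> W"
    then obtain y where y: "y \<in> M'" "x = y \<or> (sle 0 x \<and> le x y)" unfolding W_def by blast
    show "x \<in> N"
    proof (cases "x = y")
      case True then show ?thesis using y M'_def by blast
    next
      case False
      then have p: "sle 0 x" "le x y" using y by auto
      have "x - x \<in> U" "y - 0 \<in> U" using nbhd0_0[OF U(1)] y(1) M'_def by auto
      then have "ml x y - ml x 0 \<in> N" using U(2) by blast
      then show ?thesis by (simp add: ml_pos[OF p] ml_pos0[OF p(1)])
    qed
  qed
  have 3: "\<forall>x y. y \<in> W \<and> sle 0 x \<and> le x y \<longrightarrow> x \<in> W"
  proof (intro allI impI)
    fix x y assume h: "y \<in> W \<and> sle 0 x \<and> le x y"
    then obtain y0 where y0: "y0 \<in> M'" "y = y0 \<or> (sle 0 y \<and> le y y0)" unfolding W_def by blast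
    have "le x y0"
    proof (cases "y = y0")
      case True then show ?thesis using h by simp
    next
      case False then have "le y y0" using y0(2) by blast
      then show ?thesis using le_trans[of x y y0] h by blast
    qed
    then show "x \<in> W" unfolding W_def using y0(1) h by blast
  qed
  show "\<exists>W. nbhd0 T W \<and> W \<subseteq> N \<and> (\<forall>x y. y \<in> W \<and> sle 0 x \<and> le x y \<longrightarrow> x \<in> W)"
    using 1 2 3 by blast
qed

end
theorem theorem3p12:
  fixes T :: "'a::real_vector topology"
    and le sle :: "'a \<Rightarrow> 'a \<Rightarrow> bool"
  assumes "mixed_lattice_vector_space le sle"
    and "vector_topology T"
  defines "A \<equiv> locally_symmetric_solid T le sle"
    and "B \<equiv> locally_le_full T le
              \<and> continuous_at_zero2 T (mixed_upper le sle)
              \<and> continuous_at_zero2 T (mixed_lower le sle)"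
    and "C \<equiv> uniformly_continuous2 T (mixed_upper le sle)
              \<and> uniformly_continuous2 T (mixed_lower le sle)"
    and "D \<equiv> locally_mixed_full T le sle
              \<and> continuous_at_zero2 T (mixed_upper le sle)
              \<and> continuous_at_zero2 T (mixed_lower le sle)"
  shows "(A \<longleftrightarrow> B) \<and> (A \<longrightarrow> C) \<and> (B \<longrightarrow> C) \<and> (C \<longrightarrow> D)"
proof -
  interpret tmlvs le sle T
    by (intro tmlvs.intro mlvs.intro tmlvs_axioms.intro assms(1,2))
  have CC: "C \<longrightarrow> continuous_at_zero2 T (mixed_upper le sle)
              \<and> continuous_at_zero2 T (mixed_lower le sle)"
    unfolding C_def using unif_cont mu00 ml00 by blast
  have AC: "A \<longrightarrow> C" unfolding A_def C_def using A_unif_mu unif_ml by blast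
  have AB: "A \<longrightarrow> B" using AC CC A_full unfolding A_def B_def by blast
  have BA: "B \<longrightarrow> A" unfolding A_def B_def using B_A by blast
  have CD: "C \<longrightarrow> D" using CC C_D unfolding C_def D_def by blast
  show ?thesis using AC AB BA CD by blast
qed

end
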